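(* Let $n\geq 0$ and $k\geq 3$ be integers. Then $f_k(n)=n$.
   Context: $\Sigma_k=\{0,1,\ldots,k-1\}$. A border of a word $w$ is a non-empty word that is both a proper prefix and a proper suffix of $w$; $w$ is unbordered if it has no border. A border $u$ of $w$ is non-overlapping if $|u|\le |w|/2$. The smallest BP-factorization of a word $w$ is the factorization $w=w_m\cdots w_1w_0w_1\cdots w_m$ ($m\ge 0$) in which, for each $i\ge 1$, $w_i$ is the longest non-overlapping border of $w_i\cdots w_1w_0w_1\cdots w_i$, and $w_0$ is either empty or unbordered (i.e., one repeatedly removes the longest non-overlapping border from both ends until an empty or unbordered central word remains). Its width is $2m+1$ if $w_0$ is non-empty and $2m$ if $w_0$ is empty. $f_k(n)$ denotes the maximum width of the smallest BP-factorization over all length-$n$ words over $\Sigma_k$. *)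

theory Defs
  imports Main "HOL-Library.Sublist"
begin

definition border :: "'a list \<Rightarrow> 'a list \<Rightarrow> bool" where
  "border u w \<longleftrightarrow> u \<noteq> [] \<and> u \<noteq> w \<and> prefix u w \<and> suffix u w"

definition unbordered :: "'a list \<Rightarrow> bool" where
  "unbordered w \<longleftrightarrow> \<not> (\<exists>u. border u w)"

definition nonoverlapping_border :: "'a list \<Rightarrow> 'a list \<Rightarrow> bool" where
  "nonoverlapping_border u w \<longleftrightarrow> border u w \<and> 2 * length u \<le> length w"

definition lnob_len :: "'a list \<Rightarrow> nat" where
  "lnob_len w = Max {length u | u. nonoverlapping_border u w}"

lemma border_shorter:
  assumes "border u w" "2 * length u > length w"
  shows "\<exists>v. border v w \<and> length v < length u"
proof -
  let ?p = "length w - length u" and ?m = "2 * length u - length w"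
  from assms have pw: "prefix u w" "suffix u w" "u \<noteq> []" "u \<noteq> w" by (auto simp: border_def)
  have lu: "length u < length w"
    using pw by (simp add: prefix_length_less strict_prefix_def)
  have u1: "u = take (length u) w" using pw(1) by (metis append_eq_conv_conj prefixE)
  have u2: "u = drop ?p w" using pw(2) by (metis suffix_take drop_take append_take_drop_id suffixE
        append_eq_conv_conj diff_add_inverse length_append length_drop)
  have per: "w ! i = w ! (i + ?p)" if "i < length u" for i
  proof -
    have "u ! i = w ! i" using u1 that by (metis nth_take)
    moreover have "u ! i = w ! (?p + i)" using u2 that lu by (metis nth_drop less_imp_le_nat diff_le_self)
    ultimately show ?thesis by (simp add: add.commute)
  qed
  define v where "v = take ?m w"
  have lv: "length v = ?m" using assms lu by (simp add: v_def)
  have "v \<noteq> []" using lv assms lu by auto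
  moreover have "v \<noteq> w" using lv assms lu by auto
  moreover have "prefix v w" by (simp add: v_def take_is_prefix)
  moreover have "suffix v w"
  proof -
    have "drop (length w - ?m) w = v"
    proof (rule nth_equalityI)
      show "length (drop (length w - ?m) w) = length v" using lv assms lu by simp
      fix j assume "j < length (drop (length w - ?m) w)"
      hence j: "j < ?m" using lu assms by simp
      have e: "length w - ?m = ?p + ?p" using assms lu by simp
      have "drop (length w - ?m) w ! j = w ! (?p + ?p + j)" using j lu e by (simp add: nth_drop)
      also have "\<dots> = w ! (?p + j)" using per[of "?p + j"] j lu assms by (simp add: add.commute add.left_commute)
      also have "\<dots> = w ! j" using per[of j] j lu assms by (simp add: add.commute)
      also have "\<dots> = v ! j" using j by (simp add: v_def)
      finally show "drop (length w - ?m) w ! j = v ! j" .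
    qed
    thus ?thesis by (metis suffix_drop)
  qed
  moreover have "length v < length u" using lv lu assms by simp
  ultimately show ?thesis by (auto simp: border_def)
qed

lemma border_imp_nonoverlapping:
  "border u w \<Longrightarrow> \<exists>v. nonoverlapping_border v w"
proof (induction "length u" arbitrary: u rule: less_induct)
  case less
  show ?case
  proof (cases "2 * length u \<le> length w")
    case True thus ?thesis using less.prems by (auto simp: nonoverlapping_border_def)
  next
    case False
    then obtain v where "border v w" "length v < length u"
      using border_shorter[OF less.prems] by auto
    thus ?thesis using less.hyps by blast
  qed
qed

lemma lnob_len_pos:
  assumes "\<not> unbordered w"
  shows "0 < lnob_len w" "2 * lnob_len w \<le> length w"
proof -
  let ?S = "{length u | u. nonoverlapping_border u w}"
  have fin: "finite ?S"
    by (rule finite_subset[of _ "{..length w}"]) (auto simp: nonoverlapping_border_def)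
  obtain v where v: "nonoverlapping_border v w"
    using assms border_imp_nonoverlapping by (auto simp: unbordered_def)
  hence ne: "?S \<noteq> {}" by auto
  have "Max ?S \<in> ?S" using fin ne by (rule Max_in)
  then obtain u where "nonoverlapping_border u w" "lnob_len w = length u"
    by (auto simp: lnob_len_def)
  thus "0 < lnob_len w" "2 * lnob_len w \<le> length w"
    by (auto simp: nonoverlapping_border_def border_def)
qed

text \<open>Width of the smallest BP-factorization: repeatedly remove the longest
  non-overlapping border from both ends until an empty or unbordered central word remains;
  count 2 per removal, plus 1 for a non-empty central word.\<close>
function bp_width :: "'a list \<Rightarrow> nat" where
  "bp_width w =
    (if w = [] then 0
     else if unbordered w then 1
     else 2 + bp_width (take (length w - 2 * lnob_len w) (drop (lnob_len w) w)))"
  by pat_completeness auto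
termination
proof (relation "measure length")
  fix w :: "'a list"
  assume "w \<noteq> []" "\<not> unbordered w"
  thus "(take (length w - 2 * lnob_len w) (drop (lnob_len w) w), w) \<in> measure length"
    using lnob_len_pos[of w] by auto
qed auto

declare bp_width.simps[simp del]

definition f :: "nat \<Rightarrow> nat \<Rightarrow> nat" where
  "f k n = Max {bp_width w | w :: nat list. length w = n \<and> set w \<subseteq> {0..<k}}"

end

theory Submission
  imports Defs
begin

lemma bp_width_le: "bp_width w \<le> length w"
proof (induction w rule: bp_width.induct)
  case (1 w)
  show ?case
  proof (cases "w = []")
    case True thus ?thesis by (simp add: bp_width.simps)
  next
    case F: False
    show ?thesis
    proof (cases "unbordered w")
      case True thus ?thesis using F by (simp add: bp_width.simps Suc_le_eq)
    next
      case False
      have l: "0 < lnob_len w" "2 * lnob_len w \<le> length w" using lnob_len_pos False by auto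
      have "bp_width w = 2 + bp_width (take (length w - 2 * lnob_len w) (drop (lnob_len w) w))"
        using F False by (simp add: bp_width.simps)
      also have "\<dots> \<le> 2 + length (take (length w - 2 * lnob_len w) (drop (lnob_len w) w))"
        using 1 F False by simp
      also have "\<dots> \<le> length w" using l by simp
      finally show ?thesis .
    qed
  qed
qed

definition q :: "nat \<Rightarrow> nat list" where "q i = map (\<lambda>s. s mod 3) [0..<i]"

definition ww :: "nat \<Rightarrow> nat list \<Rightarrow> nat list" where "ww i c = rev (q i) @ c @ q i"

lemma q_len[simp]: "length (q i) = i" by (simp add: q_def)
lemma q_nth: "s < i \<Longrightarrow> q i ! s = s mod 3" by (simp add: q_def)

lemma prefix_take_eq: "prefix u w \<Longrightarrow> u = take (length u) w"
  by (metis append_eq_conv_conj prefixE)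
lemma suffix_drop_eq: "suffix u w \<Longrightarrow> u = drop (length w - length u) w"
  by (metis append_eq_conv_conj diff_add_inverse2 length_append suffix_def)

lemma mod3_aux: "(e + 1 + d) mod 3 = (d::nat) mod 3 \<Longrightarrow> (e + d) mod 3 = (d + 1) mod 3 \<Longrightarrow> False"
  by (simp add: mod_simps) presburger

lemma no_long_border:
  assumes c: "length c \<le> 1" and nb: "nonoverlapping_border u (ww i c)"
  shows "length u \<le> 1"
proof (rule ccontr)
  assume "\<not> length u \<le> 1"
  hence j2: "length u \<ge> 2" by simp
  let ?w = "ww i c" let ?j = "length u"
  have lw: "length ?w = 2 * i + length c" by (simp add: ww_def)
  have ji: "?j \<le> i" using nb c lw by (auto simp: nonoverlapping_border_def)
  have p: "u = take ?j ?w" using nb by (auto simp: nonoverlapping_border_def border_def intro: prefix_take_eq)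
  have s: "u = drop (length ?w - ?j) ?w" using nb by (auto simp: nonoverlapping_border_def border_def intro: suffix_drop_eq)
  have left: "?w ! t = (i - 1 - t) mod 3" if "t < i" for t
    using that by (simp add: ww_def nth_append rev_nth q_nth)
  have right: "?w ! (length ?w - ?j + t) = (i - ?j + t) mod 3" if "t < ?j" for t
  proof -
    have "length ?w - ?j + t = i + length c + (i - ?j + t)" using lw ji that by simp
    moreover have "?w = (rev (q i) @ c) @ q i" by (simp add: ww_def)
    moreover have "length (rev (q i) @ c) = i + length c" by simp
    ultimately have "?w ! (length ?w - ?j + t) = q i ! (i - ?j + t)"
      by (metis nth_append_length_plus)
    thus ?thesis using that ji by (simp add: q_nth)
  qed
  have e: "?w ! t = ?w ! (length ?w - ?j + t)" if "t < ?j" for t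
  proof -
    have "u ! t = ?w ! t" using p that by (metis nth_take)
    moreover have "u ! t = ?w ! (length ?w - ?j + t)" using s that lw ji
      by (metis diff_le_self le_trans nth_drop)
    ultimately show ?thesis by simp
  qed
  have un: "u \<noteq> []" using j2 by auto
  have a: "(i - 1) mod 3 = (i - ?j) mod 3" using e[of 0] left[of 0] right[of 0] j2 ji un by simp
  have b: "(i - Suc (Suc 0)) mod 3 = (i - ?j + 1) mod 3" using e[of 1] left[of 1] right[of 1] j2 ji un by simp
  define d where "d = i - ?j"
  define e where "e = ?j - 2"
  have ij: "i = ?j + d" "?j = e + 2" using j2 ji by (auto simp: d_def e_def)
  have 1: "i - 1 = e + 1 + d" "i - ?j = d" "i - Suc (Suc 0) = e + d" using ij by auto
  have a': "(e + 1 + d) mod 3 = d mod 3" using a unfolding 1 .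
  have b': "(e + d) mod 3 = (d + 1) mod 3" using b unfolding 1 .
  show False using mod3_aux a' b' by blast
qed

lemma ww_width: "length c \<le> 1 \<Longrightarrow> set c \<subseteq> {0..<3} \<Longrightarrow> bp_width (ww i c) = 2 * i + length c"
proof (induction i)
  case 0
  then show ?case
  proof (cases c)
    case Nil thus ?thesis by (simp add: ww_def q_def bp_width.simps)
  next
    case (Cons a r)
    hence "c = [a]" using 0 by simp
    moreover have "unbordered [a]"
      by (auto simp: unbordered_def border_def prefix_def Cons_eq_append_conv)
    ultimately show ?thesis by (simp add: ww_def q_def bp_width.simps)
  qed
next
  case (Suc i)
  let ?x = "i mod 3"
  have qs: "q (Suc i) = q i @ [?x]" by (simp add: q_def)
  have wf: "ww (Suc i) c = [?x] @ ww i c @ [?x]" by (simp add: ww_def qs)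
  have lw: "length (ww (Suc i) c) = 2 * Suc i + length c" by (simp add: ww_def)
  have pf: "prefix [?x] (ww (Suc i) c)" unfolding wf by simp
  have sf: "suffix [?x] (ww (Suc i) c)" unfolding wf suffix_def by (rule exI[of _ "[?x] @ ww i c"]) simp
  have ne: "[?x] \<noteq> ww (Suc i) c"
  proof
    assume "[?x] = ww (Suc i) c"
    hence "length [?x] = length (ww (Suc i) c)" by simp
    thus False using lw by simp
  qed
  have nb1: "nonoverlapping_border [?x] (ww (Suc i) c)"
    unfolding nonoverlapping_border_def border_def using lw pf sf ne by auto
  have "lnob_len (ww (Suc i) c) = 1"
  proof -
    let ?S = "{length u | u. nonoverlapping_border u (ww (Suc i) c)}"
    have "1 \<in> ?S" using nb1 by force
    moreover have "\<forall>x\<in>?S. x \<le> 1" using no_long_border Suc.prems by blast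
    moreover have "finite ?S" by (rule finite_subset[of _ "{..1}"]) (use calculation in auto)
    ultimately show ?thesis unfolding lnob_len_def by (meson Max_eqI)
  qed
  moreover have "ww (Suc i) c \<noteq> []" by (simp add: wf)
  moreover have "\<not> unbordered (ww (Suc i) c)" using nb1 by (auto simp: unbordered_def nonoverlapping_border_def)
  ultimately have "bp_width (ww (Suc i) c) = 2 + bp_width (ww i c)"
    by (subst bp_width.simps) (simp add: wf)
  thus ?case using Suc by simp
qed

lemma ww_set: "set c \<subseteq> {0..<3} \<Longrightarrow> set (ww i c) \<subseteq> {0..<3}"
  by (auto simp: ww_def q_def)

theorem theorem7:
  fixes n k :: nat
  assumes "k \<ge> 3"
  shows "f k n = n"
proof -
  let ?S = "{bp_width w | w :: nat list. length w = n \<and> set w \<subseteq> {0..<k}}"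
  define c :: "nat list" where "c = (if even n then [] else [0])"
  have lc: "length c \<le> 1" "set c \<subseteq> {0..<3}" by (auto simp: c_def)
  have nc: "2 * (n div 2) + length c = n" using odd_two_times_div_two_succ[of n] by (auto simp: c_def)
  have len: "length (ww (n div 2) c) = n" using nc by (simp add: ww_def)
  have "bp_width (ww (n div 2) c) = n" using ww_width[OF lc] nc by simp
  moreover have "set (ww (n div 2) c) \<subseteq> {0..<k}" using ww_set[OF lc(2), of "n div 2"] assms by (meson ivl_subset le0 order_trans)
  ultimately have "n \<in> ?S" using len by force
  moreover have "\<forall>x\<in>?S. x \<le> n" using bp_width_le by force
  moreover have "finite ?S" by (rule finite_subset[of _ "{..n}"]) (use calculation in auto)
  ultimately show ?thesis unfolding f_def by (meson Max_eqI)
qed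

end
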